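(* Let $\Phi_1(t)=\sum_{k\ge0}\pi_k t^k$, where $\pi_k$ is the probability that a polynomial chosen uniformly at random among all $f\in\mathbb{F}_q[x]$ of degree at most $q-1$ with nonzero constant term has exactly $k$ zeroes in $\mathbb{F}_q$. Then \[ \Phi_1(t)=\left(1+\frac{t-1}{q}\right)^{q-1}. \]
   Context: $\mathbb{F}_q$ is the finite field with $q$ elements. *)

theory Defs
  imports "HOL-Computational_Algebra.Computational_Algebra" "HOL-Library.Cardinality"
begin

definition admissible_polys :: "('a::{finite,field}) poly set" where
  "admissible_polys = {f :: 'a poly. degree f \<le> CARD('a) - 1 \<and> coeff f 0 \<noteq> 0}"

definition num_zeros :: "('a::{finite,field}) poly \<Rightarrow> nat" where
  "num_zeros f = card {x. poly f x = 0}"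

definition zero_prob :: "('a::{finite,field}) itself \<Rightarrow> nat \<Rightarrow> real" where
  "zero_prob (TYPE('a)) k =
     real (card {f \<in> (admissible_polys :: 'a poly set). num_zeros f = k})
     / real (card (admissible_polys :: 'a poly set))"

end

theory Submission imports Defs "HOL-Library.FuncSet" begin

lemma fermat_ff:
  fixes x :: "'a::{finite,field}"
  assumes "x \<noteq> 0"
  shows "x ^ (CARD('a) - 1) = 1"
proof -
  define N where "N = (UNIV :: 'a set) - {0}"
  have cN: "card N = CARD('a) - 1" unfolding N_def by (simp add: card_Diff_singleton)
  have inj: "inj_on (\<lambda>y. x * y) N" using assms by (auto simp: inj_on_def)
  have img: "(\<lambda>y. x * y) ` N = N"
  proof
    show "(\<lambda>y. x * y) ` N \<subseteq> N" using assms by (auto simp: N_def)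
    show "N \<subseteq> (\<lambda>y. x * y) ` N"
    proof
      fix z assume "z \<in> N"
      then have "z = x * (z / x)" "z / x \<in> N" using assms by (auto simp: N_def)
      then show "z \<in> (\<lambda>y. x * y) ` N" by blast
    qed
  qed
  have "prod id N = prod id ((\<lambda>y. x * y) ` N)" using img by simp
  also have "\<dots> = prod (\<lambda>y. x * y) N" using prod.reindex[OF inj] by simp
  also have "\<dots> = x ^ card N * prod id N" by (simp add: prod.distrib)
  finally have "prod id N = x ^ card N * prod id N" .
  moreover have "prod id N \<noteq> 0" by (simp add: N_def)
  ultimately show ?thesis using cN by simp
qed

definition delta_poly :: "'a::{finite,field} \<Rightarrow> 'a poly" where
  "delta_poly a = 1 - [:-a, 1:] ^ (CARD('a) - 1)"

lemma card_ge2: "CARD('a::{finite,field}) \<ge> 2"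
proof -
  have "{0::'a, 1} \<subseteq> UNIV" by simp
  then have "card {0::'a,1} \<le> CARD('a)" by (intro card_mono) simp_all
  then show ?thesis by simp
qed

lemma poly_delta: "poly (delta_poly a) x = (if x = a then 1 else (0::'a::{finite,field}))"
  using fermat_ff[of "x - a"] card_ge2[where 'a='a]
  by (auto simp: delta_poly_def power_0_left)

lemma degree_delta: "degree (delta_poly (a::'a::{finite,field})) \<le> CARD('a) - 1"
proof -
  have "degree ([:-a, 1:] ^ (CARD('a) - 1)) \<le> CARD('a) - 1"
    using degree_power_le[of "[:-a,1:]" "CARD('a) - 1"] by simp
  then show ?thesis unfolding delta_poly_def
    using degree_diff_le[of 1 "CARD('a) - 1" "[:-a, 1:] ^ (CARD('a) - 1)"] by simp
qed

lemma bij_poly: "bij_betw poly {f::'a::{finite,field} poly. degree f \<le> CARD('a) - 1} UNIV"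
proof (rule bij_betwI')
  fix f g :: "'a poly"
  assume "f \<in> {f. degree f \<le> CARD('a) - 1}" "g \<in> {f. degree f \<le> CARD('a) - 1}"
  moreover have "CARD('a) \<ge> 2" by (rule card_ge2)
  ultimately show "(poly f = poly g) = (f = g)"
    using poly_eqI_degree[of UNIV f g] by auto
next
  fix h :: "'a \<Rightarrow> 'a"
  define f where "f = (\<Sum>a\<in>UNIV. smult (h a) (delta_poly a))"
  have "poly f x = h x" for x
    by (simp add: f_def poly_sum poly_delta if_distrib cong: if_cong)
  hence "h = poly f" by auto
  moreover have "degree f \<le> CARD('a) - 1" unfolding f_def
    by (intro degree_sum_le) (use degree_delta in \<open>auto intro: order.trans[OF degree_smult_le]\<close>)
  ultimately show "\<exists>f\<in>{f. degree f \<le> CARD('a) - 1}. h = poly f" by blast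
qed simp


lemma card_Compl: "card (- (A::'a::finite set)) = CARD('a) - card A"
  by (simp add: Compl_eq_Diff_UNIV card_Diff_subset)

lemma count_k:
  "card {g::'a::{finite,field} \<Rightarrow> 'a. g 0 \<noteq> 0 \<and> card {x. g x = 0} = k}
     = ((CARD('a) - 1) choose k) * (CARD('a) - 1) ^ (CARD('a) - k)"
proof -
  define ZZ where "ZZ = {Z::'a set. Z \<subseteq> -{0} \<and> card Z = k}"
  define B where "B = (\<lambda>Z (x::'a). if x \<in> Z then {0::'a} else -{0})"
  have eq: "{g::'a \<Rightarrow> 'a. g 0 \<noteq> 0 \<and> card {x. g x = 0} = k} = (\<Union>Z\<in>ZZ. PiE UNIV (B Z))"
  proof (intro set_eqI iffI)
    fix g :: "'a \<Rightarrow> 'a" assume "g \<in> {g. g 0 \<noteq> 0 \<and> card {x. g x = 0} = k}"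
    then have "{x. g x = 0} \<in> ZZ" "g \<in> PiE UNIV (B {x. g x = 0})"
      by (auto simp: ZZ_def B_def PiE_iff)
    then show "g \<in> (\<Union>Z\<in>ZZ. PiE UNIV (B Z))" by blast
  next
    fix g :: "'a \<Rightarrow> 'a" assume "g \<in> (\<Union>Z\<in>ZZ. PiE UNIV (B Z))"
    then obtain Z where Z: "Z \<in> ZZ" "g \<in> PiE UNIV (B Z)" by blast
    then have "{x. g x = 0} = Z" by (auto simp: B_def PiE_iff split: if_splits)
    moreover have "0 \<notin> Z" using Z by (auto simp: ZZ_def)
    ultimately show "g \<in> {g. g 0 \<noteq> 0 \<and> card {x. g x = 0} = k}" using Z by (auto simp: ZZ_def)
  qed
  have cardPi: "card (PiE UNIV (B Z)) = (CARD('a) - 1) ^ (CARD('a) - k)" if "Z \<in> ZZ" for Z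
  proof -
    have "card (PiE UNIV (B Z)) = (\<Prod>x\<in>UNIV. card (B Z x))" by (simp add: card_PiE)
    also have "\<dots> = (\<Prod>x\<in>UNIV. if x \<in> Z then 1 else CARD('a) - 1)"
      by (intro prod.cong) (auto simp: B_def card_Compl)
    also have "\<dots> = (CARD('a) - 1) ^ card (- Z)"
      by (simp add: prod.If_cases Compl_eq_Diff_UNIV)
    also have "card (- Z) = CARD('a) - k" using that by (simp add: ZZ_def card_Compl)
    finally show ?thesis .
  qed
  have disj: "PiE UNIV (B Z1) \<inter> PiE UNIV (B Z2) = {}" if "Z1 \<noteq> Z2" for Z1 Z2
  proof (rule ccontr)
    assume "PiE UNIV (B Z1) \<inter> PiE UNIV (B Z2) \<noteq> {}"
    then obtain g where "g \<in> PiE UNIV (B Z1)" "g \<in> PiE UNIV (B Z2)" by blast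
    then have "{x. g x = 0} = Z1" "{x. g x = 0} = Z2" by (auto simp: B_def PiE_iff split: if_splits)
    with that show False by simp
  qed
  have "card (\<Union>Z\<in>ZZ. PiE UNIV (B Z)) = (\<Sum>Z\<in>ZZ. card (PiE UNIV (B Z)))"
    by (intro card_UN_disjoint) (simp_all add: disj)
  also have "\<dots> = card ZZ * (CARD('a) - 1) ^ (CARD('a) - k)" using cardPi by simp
  also have "card ZZ = (CARD('a) - 1) choose k"
    unfolding ZZ_def by (subst n_subsets) (auto simp: card_Compl)
  finally show ?thesis using eq by simp
qed

lemma count_total:
  "card {g::'a::{finite,field} \<Rightarrow> 'a. g 0 \<noteq> 0} = (CARD('a) - 1) * CARD('a) ^ (CARD('a) - 1)"
proof -
  have "{g::'a \<Rightarrow> 'a. g 0 \<noteq> 0} = PiE UNIV (\<lambda>x. if x = 0 then -{0} else UNIV)"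
    by (auto simp: PiE_iff) (metis ComplD singletonI)
  moreover have "card (PiE UNIV (\<lambda>x::'a. if x = 0 then -{0::'a} else UNIV)) = (\<Prod>x::'a\<in>UNIV. if x = 0 then CARD('a) - 1 else CARD('a))"
    apply (subst card_PiE)
     apply simp
    apply (rule prod.cong)
     apply (auto simp: card_Compl)
    done
  moreover have "(\<Prod>x\<in>(UNIV::'a set). if x = 0 then CARD('a) - 1 else CARD('a)) = (CARD('a) - 1) * CARD('a) ^ (CARD('a) - 1)"
    proof -
    have "{x::'a. x \<noteq> 0} = -{0}" by auto
    then have "card {x::'a. x \<noteq> 0} = CARD('a) - 1" by (simp add: card_Compl)
    then show ?thesis by (simp add: prod.If_cases Int_def)
  qed
  ultimately show ?thesis by simp
qed

lemma card_transfer: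
  "card {f::'a::{finite,field} poly. degree f \<le> CARD('a) - 1 \<and> Q (poly f)} = card {g. Q g}"
proof -
  let ?P = "{f::'a poly. degree f \<le> CARD('a) - 1}"
  have inj: "inj_on poly {f::'a poly. degree f \<le> CARD('a) - 1 \<and> Q (poly f)}"
    using bij_betw_imp_inj_on[OF bij_poly] by (rule inj_on_subset) auto
  have "poly ` {f::'a poly. degree f \<le> CARD('a) - 1 \<and> Q (poly f)} = {g. Q g}"
  proof (intro set_eqI iffI)
    fix g assume "g \<in> {g. Q g}"
    moreover obtain f where "f \<in> ?P" "poly f = g"
      using bij_betw_imp_surj_on[OF bij_poly] by (metis UNIV_I imageE)
    ultimately show "g \<in> poly ` {f::'a poly. degree f \<le> CARD('a) - 1 \<and> Q (poly f)}" by auto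
  qed auto
  with card_image[OF inj] show ?thesis by simp
qed


lemma rhs_nth:
  fixes c :: real
  shows "((1 + fps_const c * (fps_X - 1)) ^ n) $ k
         = (if k \<le> n then real (n choose k) * c^k * (1-c)^(n-k) else 0)"
proof -
  have e: "1 + fps_const c * (fps_X - 1) = fps_const c * fps_X + fps_const (1-c)"
    by (simp add: algebra_simps flip: fps_const_sub)
  have t: "of_nat (n choose j) * (fps_const c * fps_X) ^ j * fps_const (1-c) ^ (n-j)
      = fps_const (real (n choose j) * c^j * (1-c)^(n-j)) * fps_X ^ j" for j
    by (simp add: power_mult_distrib fps_const_power fps_of_nat algebra_simps flip: fps_const_mult)
  have "((1 + fps_const c * (fps_X - 1)) ^ n) $ k
     = (\<Sum>j\<le>n. (fps_const (real (n choose j) * c^j * (1-c)^(n-j)) * fps_X ^ j) $ k)"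
    unfolding e binomial_ring t fps_sum_nth by simp
  also have "\<dots> = (\<Sum>j\<le>n. if j = k then real (n choose j) * c^j * (1-c)^(n-j) else 0)"
    by (intro sum.cong) (auto simp: fps_X_power_iff)
  also have "\<dots> = (if k \<le> n then real (n choose k) * c^k * (1-c)^(n-k) else 0)"
    by (simp add: sum.delta')
  finally show ?thesis .
qed

theorem lemma4p2:
  fixes q :: nat
  assumes "q = CARD('a::{finite,field})"
  shows "Abs_fps (zero_prob TYPE('a)) =
         (1 + fps_const (1 / real q) * (fps_X - 1)) ^ (q - 1)"
proof (rule fps_ext)
  fix k
  have q2: "q \<ge> 2" using assms card_ge2[where 'a='a] by simp
  have A: "{f \<in> (admissible_polys :: 'a poly set). num_zeros f = k}
      = {f::'a poly. degree f \<le> CARD('a) - 1 \<and> (\<lambda>g. g 0 \<noteq> 0 \<and> card {x. g x = 0} = k) (poly f)}"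
    by (auto simp: admissible_polys_def num_zeros_def poly_0_coeff_0)
  have B: "(admissible_polys :: 'a poly set)
      = {f::'a poly. degree f \<le> CARD('a) - 1 \<and> (\<lambda>g. g 0 \<noteq> 0) (poly f)}"
    by (auto simp: admissible_polys_def poly_0_coeff_0)
  have cA: "card {f \<in> (admissible_polys :: 'a poly set). num_zeros f = k}
      = ((q - 1) choose k) * (q - 1) ^ (q - k)"
    using card_transfer[where 'a='a and Q="\<lambda>g. g 0 \<noteq> 0 \<and> card {x. g x = 0} = k"] count_k[where 'a='a] assms A by simp
  have cB: "card (admissible_polys :: 'a poly set) = (q - 1) * q ^ (q - 1)"
    using card_transfer[where 'a='a and Q="\<lambda>g. g 0 \<noteq> 0"] count_total[where 'a='a] assms B by simp
  have "zero_prob TYPE('a) k = real (((q - 1) choose k) * (q - 1) ^ (q - k)) / real ((q - 1) * q ^ (q - 1))"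
    unfolding zero_prob_def cA cB ..
  also have "\<dots> = (if k \<le> q - 1 then real ((q - 1) choose k) * (1 / real q)^k * (1 - 1 / real q)^(q - 1 - k) else 0)"
  proof (cases "k \<le> q - 1")
    case True
    then have qk: "q - k = Suc (q - 1 - k)" using q2 by simp
    have qq: "real q ^ (q - 1) = real q ^ k * real q ^ (q - 1 - k)"
    proof -
      have "q - 1 = k + (q - 1 - k)" using True by simp
      then show ?thesis by (metis power_add)
    qed
    have r: "1 - 1 / real q = real (q - 1) / real q" using q2 by (simp add: field_simps of_nat_diff)
    have ap: "real (q - 1) > 0" "real q > 0" using q2 by auto
    have gen: "C * a ^ Suc m / (a * (Q ^ k * Q ^ m)) = C * (1 / Q) ^ k * (a / Q) ^ m"
      if "a > 0" "Q > 0" for C a Q :: real and m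
      using that by (simp add: field_simps power_divide)
    show ?thesis using True unfolding qk r of_nat_mult of_nat_power qq
      using gen[OF ap] by simp
  next
    case False
    then show ?thesis by simp
  qed
  also have "\<dots> = ((1 + fps_const (1 / real q) * (fps_X - 1)) ^ (q - 1)) $ k"
    by (rule rhs_nth[symmetric])
  finally show "Abs_fps (zero_prob TYPE('a)) $ k = ((1 + fps_const (1 / real q) * (fps_X - 1)) ^ (q - 1)) $ k"
    by simp
qed

end
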